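(* Let $m>0$, $R>m/2$, and $\lambda\le 0$. Using Euclidean polar coordinates $(r,\theta)$ on the annulus $\{m/2\le r\le R\}$ in the plane, suppose $u=u(r,\theta)$ is a smooth solution of $$u_{rr}+\frac{u_r}{r}+\frac{u_{\theta\theta}}{r^2}+\frac{m}{r^3}\Big(1+\frac{m}{2r}\Big)^{-2}u+\lambda\Big(1+\frac{m}{2r}\Big)^4u=0$$ with $u_r=0$ on $r=m/2$ and $u=0$ on $r=R$. Then (a) $u$ is radial, i.e. $u=u(r)$; and (b) the space of such solutions has dimension at most one, i.e. each non-positive eigenvalue of this problem has multiplicity one.
   Context: This equation with these boundary conditions is the eigenvalue equation $L_{\Sigma_0}u+\lambda e^{2\varphi}u=0$ (written in Euclidean terms) for the Jacobi operator of the plane $\Sigma_0=\{x_3=0\}$ in the Schwarzschild manifold $M=\{|x|\ge m/2\}$, $g=e^{2\varphi}\delta$, $e^{2\varphi}=(1+\frac{m}{2|x|})^4$, restricted to $\{|x|\le R\}$, with Dirichlet condition on $|x|=R$ and the free-boundary (Neumann) condition on the horizon $|x|=m/2$. *)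

theory Defs
  imports "HOL-Analysis.Analysis"
begin

text \<open>Functions of the polar coordinates (r, theta) are modelled as maps real \<times> real \<Rightarrow> real,
  with first component r and second component theta.\<close>

definition D1 :: "(real \<times> real \<Rightarrow> real) \<Rightarrow> real \<times> real \<Rightarrow> real" where
  "D1 f p = deriv (\<lambda>t. f (t, snd p)) (fst p)"

definition D2 :: "(real \<times> real \<Rightarrow> real) \<Rightarrow> real \<times> real \<Rightarrow> real" where
  "D2 f p = deriv (\<lambda>t. f (fst p, t)) (snd p)"

fun Ck_on :: "nat \<Rightarrow> (real \<times> real) set \<Rightarrow> (real \<times> real \<Rightarrow> real) \<Rightarrow> bool" where
  "Ck_on 0 S f = continuous_on S f"
| "Ck_on (Suc n) S f =
     (continuous_on S f \<and> (\<forall>p\<in>S. f differentiable (at p)) \<and>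
      Ck_on n S (D1 f) \<and> Ck_on n S (D2 f))"

definition smooth_on :: "(real \<times> real) set \<Rightarrow> (real \<times> real \<Rightarrow> real) \<Rightarrow> bool" where
  "smooth_on S f \<longleftrightarrow> (\<forall>n. Ck_on n S f)"

definition annulus_polar :: "real \<Rightarrow> real \<Rightarrow> (real \<times> real) set" where
  "annulus_polar m R = {p. m / 2 \<le> fst p \<and> fst p \<le> R}"

text \<open>u is a smooth solution (in polar coordinates) of the eigenvalue problem:
  smooth up to the boundary (i.e. smooth on an open neighbourhood of the closed annulus),
  2 pi-periodic in theta, satisfying the PDE, the Neumann condition at r = m/2 and the
  Dirichlet condition at r = R.\<close>
definition eigen_solution :: "real \<Rightarrow> real \<Rightarrow> real \<Rightarrow> (real \<times> real \<Rightarrow> real) \<Rightarrow> bool" where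
  "eigen_solution m R lam u \<longleftrightarrow>
     (\<exists>U. open U \<and> annulus_polar m R \<subseteq> U \<and> smooth_on U u) \<and>
     (\<forall>r \<theta>. m / 2 \<le> r \<and> r \<le> R \<longrightarrow> u (r, \<theta> + 2 * pi) = u (r, \<theta>)) \<and>
     (\<forall>r \<theta>. m / 2 < r \<and> r < R \<longrightarrow>
        D1 (D1 u) (r, \<theta>) + D1 u (r, \<theta>) / r + D2 (D2 u) (r, \<theta>) / r ^ 2
        + m / (r ^ 3 * (1 + m / (2 * r)) ^ 2) * u (r, \<theta>)
        + lam * (1 + m / (2 * r)) ^ 4 * u (r, \<theta>) = 0) \<and>
     (\<forall>\<theta>. D1 u (m / 2, \<theta>) = 0) \<and>
     (\<forall>\<theta>. u (R, \<theta>) = 0)"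

end

theory Submission
  imports Defs
begin

lemma dirichlet_half:
  fixes g g' :: "real \<Rightarrow> real" and s :: real
  assumes d: "\<And>t. t \<in> {s..s+pi} \<Longrightarrow> (g has_real_derivative g' t) (at t within {s..s+pi})"
    and c: "continuous_on {s..s+pi} g'"
    and g0: "g s = 0" and g1: "g (s+pi) = 0"
  shows "integral {s..s+pi} (\<lambda>t. (g t)^2) \<le> 2 * integral {s..s+pi} (\<lambda>t. (g' t)^2)"
proof -
  define b :: real where "b = 1 / sqrt 2"
  have bb: "b * b = 1/2" unfolding b_def by (simp flip: power2_eq_square add: power_divide)
  have b0: "0 < b" "b < 1" unfolding b_def by (auto simp: divide_simps)
  define ph where "ph t = b * (t - s - pi/2)" for t
  define psi where "psi t = - b * tan (ph t)" for t
  define psi' where "psi' t = - (1/2) - (psi t)^2" for t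
  have cpos: "cos (ph t) > 0" if "t \<in> {s..s+pi}" for t
  proof -
    have "\<bar>t - s - pi/2\<bar> \<le> pi/2" using that by (auto simp: abs_if)
    hence "\<bar>ph t\<bar> \<le> b * (pi/2)" unfolding ph_def using b0 by (simp add: abs_mult)
    also have "\<dots> < pi/2" using b0 pi_gt_zero by simp
    finally show ?thesis by (intro cos_gt_zero_pi) auto
  qed
  have dpsi: "(psi has_real_derivative psi' t) (at t)" if "t \<in> {s..s+pi}" for t
  proof -
    have cz: "cos (ph t) \<noteq> 0" using cpos[OF that] by simp
    have "(psi has_real_derivative (- b * (inverse (cos (ph t) ^ 2) * (b * 1)))) (at t)"
      unfolding psi_def ph_def
      by (rule derivative_eq_intros DERIV_tan refl | use cz ph_def in simp)+
    moreover have "- b * (inverse (cos (ph t) ^ 2) * (b * 1)) = psi' t"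
    proof -
      have "inverse (cos (ph t) ^ 2) = 1 + (tan (ph t))^2"
        using cz by (simp add: tan_def field_simps power2_eq_square sin_squared_eq)
      thus ?thesis unfolding psi'_def psi_def using bb
        by (simp add: algebra_simps power2_eq_square)
    qed
    ultimately show ?thesis by simp
  qed
  define H where "H t = (g t)^2 * psi t" for t
  define H' where "H' t = 2 * g t * g' t * psi t + (g t)^2 * psi' t" for t
  have dH: "(H has_vector_derivative H' t) (at t within {s..s+pi})" if "t \<in> {s..s+pi}" for t
  proof -
    have "(H has_real_derivative (2 * g t * g' t * psi t + (g t)^2 * psi' t)) (at t within {s..s+pi})"
      unfolding H_def
      apply (rule derivative_eq_intros d[OF that] DERIV_subset[OF dpsi[OF that]] refl | simp)+
      done
    thus ?thesis unfolding H'_def by (simp add: has_real_derivative_iff_has_vector_derivative)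
  qed
  have HI: "(H' has_integral (H (s+pi) - H s)) {s..s+pi}"
    by (rule fundamental_theorem_of_calculus) (use dH pi_gt_zero in auto)
  hence HI0: "(H' has_integral 0) {s..s+pi}" unfolding H_def using g0 g1 by simp
  have cg: "continuous_on {s..s+pi} g"
    using d by (intro DERIV_continuous_on) auto
  have cpsi: "continuous_on {s..s+pi} psi"
    using dpsi by (intro DERIV_continuous_on) (auto intro: DERIV_subset)
  define K where "K t = (g' t - g t * psi t)^2" for t
  have cK: "continuous_on {s..s+pi} K" unfolding K_def
    by (intro continuous_intros c cg cpsi)
  have KI: "(K has_integral integral {s..s+pi} K) {s..s+pi}"
    using cK integrable_continuous_real by blast
  have Kpos: "integral {s..s+pi} K \<ge> 0"
    by (rule integral_nonneg) (use integrable_continuous_real[OF cK] K_def in auto)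
  have "((\<lambda>t. K t + H' t) has_integral (integral {s..s+pi} K + 0)) {s..s+pi}"
    by (rule has_integral_add[OF KI HI0])
  moreover have "K t + H' t = (g' t)^2 - (g t)^2 / 2" for t
    unfolding K_def H'_def psi'_def by (simp add: algebra_simps power2_eq_square)
  ultimately have I: "((\<lambda>t. (g' t)^2 - (g t)^2 / 2) has_integral integral {s..s+pi} K) {s..s+pi}"
    by simp
  have i1: "(\<lambda>t. (g' t)^2) integrable_on {s..s+pi}"
    by (intro integrable_continuous_real continuous_intros c)
  have i2: "(\<lambda>t. (g t)^2 / 2) integrable_on {s..s+pi}"
    by (intro integrable_continuous_real continuous_intros cg) auto
  have "integral {s..s+pi} (\<lambda>t. (g' t)^2 - (g t)^2 / 2) =
        integral {s..s+pi} (\<lambda>t. (g' t)^2) - integral {s..s+pi} (\<lambda>t. (g t)^2 / 2)"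
    by (rule integral_diff[OF i1 i2])
  moreover have "integral {s..s+pi} (\<lambda>t. (g t)^2 / 2) = integral {s..s+pi} (\<lambda>t. (g t)^2) / 2"
    by (simp add: integral_divide)
  ultimately show ?thesis using I Kpos integral_unique[OF I] by linarith
qed


lemma icomb:
  fixes f :: "real \<Rightarrow> real"
  assumes "continuous_on UNIV f" "a \<le> c" "c \<le> b"
  shows "integral {a..c} f + integral {c..b} f = integral {a..b} f"
  by (rule Henstock_Kurzweil_Integration.integral_combine)
     (use assms in \<open>auto intro: integrable_continuous_real continuous_on_subset\<close>)

lemma periodic_integral_start:
  fixes f :: "real \<Rightarrow> real"
  assumes cf: "continuous_on UNIV f" and per: "\<And>x. f (x + p) = f x" and p: "p \<ge> 0"
  shows "integral {c..c+p} f = integral {d..d+p} f"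
proof -
  define L where "L = min c d"
  define M where "M = max c d"
  define L' where "L' = L - 1"
  define B where "B = M + p + 1"
  define I where "I u = integral {L'..u} f" for u
  have cfB: "continuous_on {L'..B} f" using cf continuous_on_subset by blast
  have dI: "(I has_real_derivative f u) (at u)" if "L' < u" "u < B" for u
  proof -
    have "(I has_real_derivative f u) (at u within {L'..B})"
      unfolding I_def by (rule integral_has_real_derivative[OF cfB]) (use that in auto)
    thus ?thesis using at_within_Icc_at[OF that] by simp
  qed
  define F where "F s = I (s + p) - I s" for s
  have dF: "(F has_field_derivative 0) (at s within {L..M})" if "s \<in> {L..M}" for s
  proof -
    have i1: "L' < s + p" "s + p < B" "L' < s" "s < B"
      using that p unfolding L'_def B_def by auto
    have d1: "((\<lambda>s. I (s+p)) has_real_derivative f (s+p) * 1) (at s)"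
      by (rule DERIV_chain2[where g="\<lambda>s. s + p" and x=s, OF dI[OF i1(1,2)]]) (rule derivative_eq_intros refl | simp)+
    have "(F has_field_derivative (f (s+p) * 1 - f s)) (at s)" unfolding F_def
      by (rule DERIV_diff[OF d1 dI[OF i1(3,4)]])
    thus ?thesis using per by (auto intro: DERIV_subset)
  qed
  obtain k where k: "\<And>x. x \<in> {L..M} \<Longrightarrow> F x = k"
    using has_field_derivative_zero_constant[OF convex_real_interval(5) dF] by blast
  have FI: "F s = integral {s..s+p} f" if "s \<in> {L..M}" for s
  proof -
    have "integral {L'..s} f + integral {s..s+p} f = integral {L'..s+p} f"
      by (rule icomb[OF cf]) (use that p L'_def in auto)
    thus ?thesis unfolding F_def I_def by simp
  qed
  have "c \<in> {L..M}" "d \<in> {L..M}" unfolding L_def M_def by auto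
  thus ?thesis using FI k by metis
qed

lemma wirtinger_half:
  fixes f f' :: "real \<Rightarrow> real"
  assumes d: "\<And>t. (f has_real_derivative f' t) (at t)"
    and cf': "continuous_on UNIV f'"
    and per: "\<And>t. f (t + 2*pi) = f t"
    and z: "integral {c..c+2*pi} f = 0"
  shows "integral {c..c+2*pi} (\<lambda>t. (f t)^2) \<le> 2 * integral {c..c+2*pi} (\<lambda>t. (f' t)^2)"
proof -
  have cf: "continuous_on UNIV f" using d by (intro DERIV_continuous_on) auto
  have per': "f' (t + 2*pi) = f' t" for t
  proof -
    have "((\<lambda>t. f (t + 2*pi)) has_real_derivative f' (t + 2*pi) * 1) (at t)"
      by (rule DERIV_chain2[OF d]) (rule derivative_eq_intros refl | simp)+
    hence "(f has_real_derivative f' (t + 2*pi)) (at t)" using per by simp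
    thus ?thesis using d DERIV_unique by blast
  qed
  define g where "g t = f t - f (t + pi)" for t
  have cg: "continuous_on {c..c+pi} g" unfolding g_def
    by (intro continuous_intros continuous_on_compose2[OF cf]) auto
  have gc: "g (c + pi) = - g c" unfolding g_def using per[of c]
    by (simp add: add.assoc)
  obtain a where a: "c \<le> a" "a \<le> c + pi" "g a = 0"
  proof (cases "g c \<le> 0")
    case True
    then show ?thesis using IVT'[of g c 0 "c+pi", OF _ _ _ cg] gc that by auto
  next
    case False
    then show ?thesis using IVT2'[of g "c+pi" 0 c, OF _ _ _ cg] gc that by auto
  qed
  define k where "k = f a"
  have fa1: "f (a + pi) = k" using a(3) unfolding g_def k_def by simp
  have fa2: "f (a + pi + pi) = k" using per[of a] unfolding k_def by (simp add: add.assoc)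
  have d': "((\<lambda>t. f t - k) has_real_derivative f' t) (at t within S)" for t S
    by (rule derivative_eq_intros DERIV_subset[OF d] refl | simp)+
  have cf'': "continuous_on S f'" for S using cf' continuous_on_subset by blast
  have h1: "integral {a..a+pi} (\<lambda>t. (f t - k)^2) \<le> 2 * integral {a..a+pi} (\<lambda>t. (f' t)^2)"
    by (rule dirichlet_half[OF d' cf'']) (use fa1 k_def in auto)
  have h2: "integral {a+pi..a+pi+pi} (\<lambda>t. (f t - k)^2) \<le> 2 * integral {a+pi..a+pi+pi} (\<lambda>t. (f' t)^2)"
    by (rule dirichlet_half[OF d' cf'']) (use fa1 fa2 in auto)
  have e: "a + pi + pi = a + 2*pi" by simp
  have cfk: "continuous_on UNIV (\<lambda>t. (f t - k)^2)" by (intro continuous_intros cf)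
  have cf'2: "continuous_on UNIV (\<lambda>t. (f' t)^2)" by (intro continuous_intros cf')
  have cf2: "continuous_on UNIV (\<lambda>t. (f t)^2)" by (intro continuous_intros cf)
  have s1: "integral {a..a+2*pi} (\<lambda>t. (f t - k)^2) \<le> 2 * integral {a..a+2*pi} (\<lambda>t. (f' t)^2)"
    using h1 h2 icomb[OF cfk, of a "a+pi" "a+2*pi"] icomb[OF cf'2, of a "a+pi" "a+2*pi"] e
    by (simp add: algebra_simps)
  have za: "integral {a..a+2*pi} f = 0"
    using z periodic_integral_start[OF cf per, of c a] by simp
  have i2: "((\<lambda>t. (f t)^2) has_integral integral {a..a+2*pi} (\<lambda>t. (f t)^2)) {a..a+2*pi}"
    using integrable_continuous_real[OF continuous_on_subset[OF cf2]] by blast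
  have i1: "(f has_integral 0) {a..a+2*pi}"
  proof -
    have "f integrable_on {a..a+2*pi}"
      by (rule integrable_continuous_real, rule continuous_on_subset[OF cf]) simp
    thus ?thesis using za by (metis has_integral_integral)
  qed
  have "((\<lambda>t. (f t)^2 - 2*k * f t + k^2) has_integral
         (integral {a..a+2*pi} (\<lambda>t. (f t)^2) - 2*k*0 + k^2 * (2*pi))) {a..a+2*pi}"
    by (intro has_integral_add has_integral_diff i2 has_integral_mult_right i1)
       (use has_integral_const_real[of "k^2" a "a+2*pi"] in \<open>simp add: mult_ac\<close>)
  moreover have "(\<lambda>t. (f t)^2 - 2*k * f t + k^2) = (\<lambda>t. (f t - k)^2)"
    by (auto simp: power2_eq_square algebra_simps)
  ultimately have "integral {a..a+2*pi} (\<lambda>t. (f t - k)^2) = integral {a..a+2*pi} (\<lambda>t. (f t)^2) + k^2 * (2*pi)"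
    by (simp add: integral_unique)
  moreover have "k^2 * (2*pi) \<ge> 0" by simp
  ultimately have "integral {a..a+2*pi} (\<lambda>t. (f t)^2) \<le> 2 * integral {a..a+2*pi} (\<lambda>t. (f' t)^2)"
    using s1 by linarith
  moreover have "integral {c..c+2*pi} (\<lambda>t. (f t)^2) = integral {a..a+2*pi} (\<lambda>t. (f t)^2)"
    by (rule periodic_integral_start[OF cf2]) (use per in auto)
  moreover have "integral {c..c+2*pi} (\<lambda>t. (f' t)^2) = integral {a..a+2*pi} (\<lambda>t. (f' t)^2)"
    by (rule periodic_integral_start[OF cf'2]) (use per' in auto)
  ultimately show ?thesis by simp
qed


lemma cslice2:
  fixes w :: "real \<times> real \<Rightarrow> real"
  assumes "continuous_on ({a..b} \<times> UNIV) w" "x \<in> {a..b}"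
  shows "continuous_on S (\<lambda>t. w (x,t))"
  by (rule continuous_on_compose2[OF assms(1)]) (use assms(2) in \<open>auto intro!: continuous_intros\<close>)

lemma core:
  fixes a b :: real and Q :: "real \<Rightarrow> real" and w w1 w11 w2 w22 :: "real \<times> real \<Rightarrow> real"
  assumes ab: "0 < a" "a < b"
    and Qb: "\<And>r. a \<le> r \<Longrightarrow> r \<le> b \<Longrightarrow> r^2 * Q r \<le> 1/2"
    and cw: "continuous_on ({a..b} \<times> UNIV) w"
    and cw1: "continuous_on ({a..b} \<times> UNIV) w1"
    and cw11: "continuous_on ({a..b} \<times> UNIV) w11"
    and cw2: "continuous_on ({a..b} \<times> UNIV) w2"
    and dr: "\<And>r \<theta>. r \<in> {a..b} \<Longrightarrow> ((\<lambda>t. w (t,\<theta>)) has_real_derivative w1 (r,\<theta>)) (at r within {a..b})"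
    and drr: "\<And>r \<theta>. r \<in> {a..b} \<Longrightarrow> ((\<lambda>t. w1 (t,\<theta>)) has_real_derivative w11 (r,\<theta>)) (at r within {a..b})"
    and dt: "\<And>r \<theta>. r \<in> {a..b} \<Longrightarrow> ((\<lambda>t. w (r,t)) has_real_derivative w2 (r,\<theta>)) (at \<theta>)"
    and dtt: "\<And>r \<theta>. r \<in> {a..b} \<Longrightarrow> ((\<lambda>t. w2 (r,t)) has_real_derivative w22 (r,\<theta>)) (at \<theta>)"
    and per: "\<And>r \<theta>. r \<in> {a..b} \<Longrightarrow> w (r, \<theta> + 2*pi) = w (r,\<theta>)"
    and pde: "\<And>r \<theta>. a < r \<Longrightarrow> r < b \<Longrightarrow>
                w11 (r,\<theta>) + w1 (r,\<theta>) / r + w22 (r,\<theta>) / r^2 + Q r * w (r,\<theta>) = 0"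
    and bc1: "\<And>\<theta>. w1 (a,\<theta>) = 0" and bc2: "\<And>\<theta>. w (b,\<theta>) = 0"
    and mean: "\<And>r c. r \<in> {a..b} \<Longrightarrow> integral {c..c+2*pi} (\<lambda>t. w (r,t)) = 0"
    and r: "r \<in> {a..b}"
  shows "w (r,\<theta>) = 0"
proof -
  define c where "c = \<theta>"
  define J where "J = {c..c+2*pi}"
  have Jc: "cbox c (c+2*pi) = J" unfolding J_def by (simp add: cbox_interval)
  have cs: "continuous_on S (\<lambda>t. f (x,t))" if "continuous_on ({a..b} \<times> UNIV) f" "x \<in> {a..b}" for f :: "real \<times> real \<Rightarrow> real" and S x
    using cslice2[OF that] .
  define G where "G x = integral J (\<lambda>t. w (x,t) * w1 (x,t))" for x
  define P where "P x t = w1 (x,t) * w1 (x,t) + w (x,t) * w11 (x,t)" for x t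
  have dG: "(G has_field_derivative integral J (P x)) (at x within {a..b})" if x: "x \<in> {a..b}" for x
    unfolding G_def Jc[symmetric]
  proof (rule leibniz_rule_field_derivative)
    fix y t assume y: "y \<in> {a..b}"
    show "((\<lambda>x. w (x,t) * w1 (x,t)) has_field_derivative P y t) (at y within {a..b})"
      using DERIV_mult[OF dr[OF y] drr[OF y]] unfolding P_def by (simp add: algebra_simps)
  next
    fix y assume y: "y \<in> {a..b}"
    show "(\<lambda>t. w (y,t) * w1 (y,t)) integrable_on cbox c (c + 2 * pi)"
      by (rule integrable_continuous, intro continuous_intros cs[OF cw y] cs[OF cw1 y])
  next
    have e: "(\<lambda>(x,t). P x t) = (\<lambda>p. w1 p * w1 p + w p * w11 p)" unfolding P_def by auto
    show "continuous_on ({a..b} \<times> cbox c (c + 2 * pi)) (\<lambda>(x,t). P x t)"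
      unfolding e by (intro continuous_intros; rule continuous_on_subset[OF _ ]; (rule cw cw1 cw11)?; auto)
  qed (use x in auto)
  define E where "E x = x * G x" for x
  define E' where "E' x = 1 * G x + x * integral J (P x)" for x
  have dE: "(E has_field_derivative E' x) (at x within {a..b})" if "x \<in> {a..b}" for x
    unfolding E_def E'_def
    using DERIV_mult'[OF DERIV_ident dG[OF that]] by (simp add: add.commute)
  have Eb: "E' x \<ge> x * integral J (\<lambda>t. (w1 (x,t))^2)" if x: "a < x" "x < b" for x
  proof -
    have xin: "x \<in> {a..b}" using x by auto
    have x0: "x > 0" using x ab by auto
    have per2: "w2 (x, t + 2*pi) = w2 (x,t)" for t
    proof -
      have "((\<lambda>t. w (x, t + 2*pi)) has_real_derivative w2 (x, t + 2*pi) * 1) (at t)"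
        by (rule DERIV_chain2[OF dt[OF xin]]) (rule derivative_eq_intros refl | simp)+
      hence "((\<lambda>t. w (x, t)) has_real_derivative w2 (x, t + 2*pi)) (at t)" using per[OF xin] by simp
      thus ?thesis using dt[OF xin] DERIV_unique by blast
    qed
    define D where "D t = w2 (x,t) * w2 (x,t) + w (x,t) * w22 (x,t)" for t
    have "(D has_integral (w (x,c+2*pi) * w2 (x,c+2*pi) - w (x,c) * w2 (x,c))) J"
      unfolding J_def
    proof (rule fundamental_theorem_of_calculus)
      fix t assume "t \<in> {c..c+2*pi}"
      have "((\<lambda>t. w (x,t) * w2 (x,t)) has_real_derivative D t) (at t within {c..c+2*pi})"
        using DERIV_mult'[OF DERIV_subset[OF dt[OF xin]] DERIV_subset[OF dtt[OF xin]]]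
        unfolding D_def by (simp add: algebra_simps)
      thus "((\<lambda>t. w (x,t) * w2 (x,t)) has_vector_derivative D t) (at t within {c..c+2*pi})"
        by (simp add: has_real_derivative_iff_has_vector_derivative)
    qed simp
    hence DI: "(D has_integral 0) J" using per[OF xin, of c] per2[of c] by simp
    define A0 where "A0 = integral J (\<lambda>t. (w (x,t))^2)"
    define A1 where "A1 = integral J (\<lambda>t. (w1 (x,t))^2)"
    define A2 where "A2 = integral J (\<lambda>t. (w2 (x,t))^2)"
    have I0: "((\<lambda>t. (w (x,t))^2) has_integral A0) J" unfolding A0_def J_def
      by (intro integrable_integral integrable_continuous_real continuous_intros cs[OF cw xin])
    have I1: "((\<lambda>t. (w1 (x,t))^2) has_integral A1) J" unfolding A1_def J_def
      by (intro integrable_integral integrable_continuous_real continuous_intros cs[OF cw1 xin])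
    have I2: "((\<lambda>t. (w2 (x,t))^2) has_integral A2) J" unfolding A2_def J_def
      by (intro integrable_integral integrable_continuous_real continuous_intros cs[OF cw2 xin])
    have "((\<lambda>t. x * (w1 (x,t))^2 + (w2 (x,t))^2 / x - x * Q x * (w (x,t))^2 - D t / x) has_integral
           (x * A1 + A2 / x - x * Q x * A0 - 0 / x)) J"
      by (intro has_integral_add has_integral_diff has_integral_mult_right has_integral_divide I0 I1 I2 DI)
    moreover have "x * (w1 (x,t))^2 + (w2 (x,t))^2 / x - x * Q x * (w (x,t))^2 - D t / x
                   = x * P x t + w (x,t) * w1 (x,t)" for t
    proof -
      have w11e: "w11 (x,t) = - (w1 (x,t) / x + w22 (x,t) / x^2 + Q x * w (x,t))"
        using pde[OF x, of t] by linarith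
      show ?thesis unfolding P_def D_def w11e using x0
        by (simp add: field_simps power2_eq_square)
    qed
    ultimately have IE: "((\<lambda>t. x * P x t + w (x,t) * w1 (x,t)) has_integral
           (x * A1 + A2 / x - x * Q x * A0)) J" by simp
    have iP: "P x integrable_on J" unfolding P_def J_def
      by (intro integrable_continuous_real continuous_intros cs[OF cw xin] cs[OF cw1 xin] cs[OF cw11 xin])
    have iG: "(\<lambda>t. w (x,t) * w1 (x,t)) integrable_on J" unfolding J_def
      by (intro integrable_continuous_real continuous_intros cs[OF cw xin] cs[OF cw1 xin])
    have "integral J (\<lambda>t. x * P x t + w (x,t) * w1 (x,t)) = x * integral J (P x) + G x"
      unfolding G_def using integral_add[OF integrable_on_cmult_right[OF iP, of x] iG]
      by (simp add: integral_mult_right mult.commute)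
    hence E'e: "E' x = x * A1 + A2 / x - x * Q x * A0"
      unfolding E'_def using integral_unique[OF IE] by simp
    have wi: "A0 \<le> 2 * A2" unfolding A0_def A2_def J_def
      by (rule wirtinger_half[OF dt[OF xin] cs[OF cw2 xin] per[OF xin] mean[OF xin]])
    have A0p: "A0 \<ge> 0" using I0 by (rule has_integral_nonneg) simp
    have "x^2 * Q x * A0 \<le> 1/2 * A0" by (rule mult_right_mono[OF Qb A0p]) (use x in auto)
    hence "A2 - x^2 * Q x * A0 \<ge> 0" using wi by linarith
    hence "(A2 - x^2 * Q x * A0) / x \<ge> 0" using x0 by simp
    moreover have "(A2 - x^2 * Q x * A0) / x = A2 / x - x * Q x * A0" using x0
      by (simp add: field_simps power2_eq_square)
    ultimately show ?thesis unfolding E'e A1_def[symmetric] by linarith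
  qed
  have cE: "continuous_on {a..b} E" using dE by (rule DERIV_continuous_on)
  have Ea: "E a = 0" unfolding E_def G_def using bc1 by simp
  have Ebb: "E b = 0" unfolding E_def G_def using bc2 by simp
  have dEat: "(E has_field_derivative E' x) (at x)" if "a < x" "x < b" for x
    using dE[of x] that at_within_Icc_at[OF that] by auto
  have A1nn: "integral J (\<lambda>t. (w1 (x,t))^2) \<ge> 0" if "x \<in> {a..b}" for x
    unfolding J_def
    by (rule integral_nonneg) (auto intro!: integrable_continuous_real continuous_intros cs[OF cw1 that])
  have E'nn: "E' x \<ge> 0" if "a < x" "x < b" for x
  proof -
    have "x * integral J (\<lambda>t. (w1 (x,t))^2) \<ge> 0" using A1nn[of x] that ab by simp
    thus ?thesis using Eb[OF that] by linarith
  qed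
  have E0: "E x = 0" if "x \<in> {a..b}" for x
  proof -
    have "E a \<le> E x"
      by (rule DERIV_nonneg_imp_increasing_open[of a x E]) (use that ab in \<open>auto intro: continuous_on_subset[OF cE] intro!: exI[of _ "E' _"] dEat E'nn\<close>)
    moreover have "E x \<le> E b"
      by (rule DERIV_nonneg_imp_increasing_open[of x b E]) (use that ab in \<open>auto intro: continuous_on_subset[OF cE] intro!: exI[of _ "E' _"] dEat E'nn\<close>)
    ultimately show ?thesis using Ea Ebb by simp
  qed
  have E'0: "E' x = 0" if x: "a < x" "x < b" for x
  proof -
    have "((\<lambda>_. 0) has_field_derivative E' x) (at x)"
      by (rule has_field_derivative_transform_within_open[OF dEat[OF x], of "{a<..<b}"])
         (use x E0 in auto)
    thus ?thesis using DERIV_const DERIV_unique by blast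
  qed
  have w1z: "w1 (x,t) = 0" if x: "a < x" "x < b" and t: "t \<in> J" for x t
  proof -
    have xin: "x \<in> {a..b}" using x by auto
    have "x * integral J (\<lambda>t. (w1 (x,t))^2) \<le> 0" using Eb[OF x] E'0[OF x] by simp
    hence "integral J (\<lambda>t. (w1 (x,t))^2) \<le> 0" using x ab
      by (simp add: mult_le_0_iff)
    hence "integral {c..c+2*pi} (\<lambda>t. (w1 (x,t))^2) = 0" using A1nn[OF xin] unfolding J_def by simp
    hence "\<forall>t\<in>{c..c+2*pi}. (w1 (x,t))^2 = 0"
      by (subst (asm) integral_eq_0_iff) (auto intro!: continuous_intros cs[OF cw1 xin])
    thus ?thesis using t unfolding J_def by simp
  qed
  show ?thesis
  proof (cases "r = b")
    case True thus ?thesis using bc2 by simp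
  next
    case False
    hence rb: "r < b" using r by simp
    have cphi: "continuous_on {r..b} (\<lambda>s. w (s,c))"
      by (rule continuous_on_subset[OF DERIV_continuous_on[OF dr]]) (use r in auto)
    have "w (b,c) = w (r,c)"
    proof (rule DERIV_isconst_end[OF rb cphi])
      fix s assume s: "r < s" "s < b"
      have as: "a < s" using r s by auto
      have "((\<lambda>s. w (s,c)) has_real_derivative w1 (s,c)) (at s)"
        using dr[of s c] at_within_Icc_at[OF as s(2)] s as by auto
      moreover have "w1 (s,c) = 0" by (rule w1z[OF as s(2)]) (simp add: J_def)
      ultimately show "((\<lambda>s. w (s,c)) has_real_derivative 0) (at s)" by simp
    qed
    thus ?thesis using bc2 c_def by simp
  qed
qed


lemma two_prod_le:
  fixes x y :: real
  shows "\<bar>2 * x * y\<bar> \<le> x^2 + y^2"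
proof -
  have "0 \<le> (x - y)^2" "0 \<le> (x + y)^2" by simp_all
  thus ?thesis by (simp add: abs_le_iff power2_eq_square algebra_simps)
qed

lemma ode_unique:
  fixes a b M :: real and Q z z1 z11 :: "real \<Rightarrow> real"
  assumes ab: "0 < a" "a < b"
    and dz: "\<And>r. r \<in> {a..b} \<Longrightarrow> (z has_real_derivative z1 r) (at r)"
    and dz1: "\<And>r. r \<in> {a..b} \<Longrightarrow> (z1 has_real_derivative z11 r) (at r)"
    and ode: "\<And>r. a < r \<Longrightarrow> r < b \<Longrightarrow> z11 r + z1 r / r + Q r * z r = 0"
    and Qb: "\<And>r. r \<in> {a..b} \<Longrightarrow> \<bar>Q r\<bar> \<le> M"
    and za: "z a = 0" and z1a: "z1 a = 0"
    and r: "r \<in> {a..b}"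
  shows "z r = 0"
proof -
  have M0: "M \<ge> 0" using Qb[of a] ab by auto
  define C where "C = 1 + M"
  define E where "E r = (z r)^2 + (z1 r)^2" for r
  define F where "F r = E r * exp (- C * r)" for r
  define E' where "E' r = 2 * z r * z1 r + 2 * z1 r * z11 r" for r
  have dE: "(E has_real_derivative E' x) (at x)" if "x \<in> {a..b}" for x
    unfolding E_def E'_def
    by (rule derivative_eq_intros dz[OF that] dz1[OF that] refl | simp)+
  define F' where "F' r = E' r * exp (- C * r) + E r * (exp (- C * r) * (- C))" for r
  have dF: "(F has_real_derivative F' x) (at x)" if "x \<in> {a..b}" for x
    unfolding F_def F'_def
    by (rule derivative_eq_intros dE[OF that] refl | simp)+
  have E'b: "E' x \<le> C * E x" if x: "a < x" "x < b" for x
  proof -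
    have xin: "x \<in> {a..b}" using x by auto
    have z11e: "z11 x = - (z1 x / x + Q x * z x)" using ode[OF x] by linarith
    have E'e: "E' x = 2 * z x * z1 x - 2 * (z1 x)^2 / x - Q x * (2 * z x * z1 x)"
      unfolding E'_def z11e by (simp add: algebra_simps power2_eq_square)
    have t1: "2 * z x * z1 x \<le> E x" using two_prod_le[of "z x" "z1 x"] unfolding E_def by linarith
    have t2: "2 * (z1 x)^2 / x \<ge> 0" using x ab by simp
    have "- (Q x * (2 * z x * z1 x)) \<le> \<bar>Q x\<bar> * \<bar>2 * z x * z1 x\<bar>"
      by (metis abs_ge_minus_self abs_mult)
    also have "\<dots> \<le> M * E x" unfolding E_def
      by (rule mult_mono[OF Qb[OF xin] two_prod_le M0]) simp
    finally have t3: "- (Q x * (2 * z x * z1 x)) \<le> M * E x" .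
    show ?thesis unfolding E'e C_def using t1 t2 t3 by (simp add: algebra_simps)
  qed
  have F'n: "F' x \<le> 0" if x: "a < x" "x < b" for x
  proof -
    have "F' x = (E' x - C * E x) * exp (- C * x)" unfolding F'_def by (simp add: algebra_simps)
    moreover have "E' x - C * E x \<le> 0" using E'b[OF x] by simp
    ultimately show ?thesis by (simp add: mult_nonpos_nonneg)
  qed
  have cF: "continuous_on {a..b} F"
    by (rule DERIV_continuous_on) (use dF in \<open>auto intro: DERIV_subset\<close>)
  have "- F a \<le> - F r"
  proof (rule DERIV_nonneg_imp_increasing_open[of a r "\<lambda>x. - F x"])
    show "a \<le> r" using r by simp
    show "continuous_on {a..r} (\<lambda>x. - F x)"
      by (intro continuous_intros continuous_on_subset[OF cF]) (use r in auto)
    fix x assume x: "a < x" "x < r"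
    hence xb: "x < b" using r by simp
    show "\<exists>y. ((\<lambda>x. - F x) has_real_derivative y) (at x) \<and> 0 \<le> y"
      using DERIV_minus[OF dF[of x]] F'n[OF x(1) xb] x xb by (intro exI[of _ "- F' x"]) auto
  qed
  moreover have "F a = 0" unfolding F_def E_def using za z1a by simp
  ultimately have "F r \<le> 0" by simp
  hence "E r \<le> 0" unfolding F_def by (simp add: mult_le_0_iff)
  hence "(z r)^2 \<le> 0" unfolding E_def by (smt (verit) zero_le_power2)
  thus ?thesis by simp
qed


lemma D1_deriv:
  fixes f :: "real \<times> real \<Rightarrow> real"
  assumes "f differentiable (at (x, y))"
  shows "((\<lambda>t. f (t, y)) has_real_derivative D1 f (x, y)) (at x)"
proof -
  have "(f \<circ> (\<lambda>t. (t, y))) differentiable (at x)"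
    by (rule differentiable_chain_at) (use assms in \<open>auto intro!: derivative_intros\<close>)
  hence "(\<lambda>t. f (t, y)) differentiable (at x)" by (simp add: o_def)
  thus ?thesis unfolding D1_def by (simp add: DERIV_deriv_iff_real_differentiable)
qed

lemma D2_deriv:
  fixes f :: "real \<times> real \<Rightarrow> real"
  assumes "f differentiable (at (x, y))"
  shows "((\<lambda>t. f (x, t)) has_real_derivative D2 f (x, y)) (at y)"
proof -
  have "(f \<circ> (\<lambda>t. (x, t))) differentiable (at y)"
    by (rule differentiable_chain_at) (use assms in \<open>auto intro!: derivative_intros\<close>)
  hence "(\<lambda>t. f (x, t)) differentiable (at y)" by (simp add: o_def)
  thus ?thesis unfolding D2_def by (simp add: DERIV_deriv_iff_real_differentiable)
qed

lemma ann_eq: "annulus_polar m R = {m/2..R} \<times> UNIV"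
  by (auto simp: annulus_polar_def)

lemma reg:
  assumes "eigen_solution m R lam u"
  shows "continuous_on ({m/2..R} \<times> UNIV) u" "continuous_on ({m/2..R} \<times> UNIV) (D1 u)"
    "continuous_on ({m/2..R} \<times> UNIV) (D1 (D1 u))" "continuous_on ({m/2..R} \<times> UNIV) (D2 u)"
    "continuous_on ({m/2..R} \<times> UNIV) (D2 (D2 u))"
    "\<And>r \<theta>. r \<in> {m/2..R} \<Longrightarrow> ((\<lambda>t. u (t,\<theta>)) has_real_derivative D1 u (r,\<theta>)) (at r)"
    "\<And>r \<theta>. r \<in> {m/2..R} \<Longrightarrow> ((\<lambda>t. D1 u (t,\<theta>)) has_real_derivative D1 (D1 u) (r,\<theta>)) (at r)"
    "\<And>r \<theta>. r \<in> {m/2..R} \<Longrightarrow> ((\<lambda>t. u (r,t)) has_real_derivative D2 u (r,\<theta>)) (at \<theta>)"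
    "\<And>r \<theta>. r \<in> {m/2..R} \<Longrightarrow> ((\<lambda>t. D2 u (r,t)) has_real_derivative D2 (D2 u) (r,\<theta>)) (at \<theta>)"
proof -
  obtain U where U: "open U" "annulus_polar m R \<subseteq> U" "smooth_on U u"
    using assms unfolding eigen_solution_def by blast
  have C: "Ck_on (Suc (Suc 0)) U u" using U(3) unfolding smooth_on_def by blast
  have sub: "{m/2..R} \<times> UNIV \<subseteq> U" using U(2) ann_eq by metis
  have cu: "continuous_on U u" "continuous_on U (D1 u)" "continuous_on U (D1 (D1 u))"
    "continuous_on U (D2 u)" "continuous_on U (D2 (D2 u))"
    and du: "\<forall>p\<in>U. u differentiable (at p)" "\<forall>p\<in>U. D1 u differentiable (at p)"
      "\<forall>p\<in>U. D2 u differentiable (at p)"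
    using C by auto
  show "continuous_on ({m/2..R} \<times> UNIV) u" "continuous_on ({m/2..R} \<times> UNIV) (D1 u)"
    "continuous_on ({m/2..R} \<times> UNIV) (D1 (D1 u))" "continuous_on ({m/2..R} \<times> UNIV) (D2 u)"
    "continuous_on ({m/2..R} \<times> UNIV) (D2 (D2 u))"
    using cu continuous_on_subset[OF _ sub] by blast+
  fix r \<theta> assume r: "r \<in> {m/2..R}"
  hence p: "(r,\<theta>) \<in> U" using sub by auto
  show "((\<lambda>t. u (t,\<theta>)) has_real_derivative D1 u (r,\<theta>)) (at r)"
    by (rule D1_deriv) (use du p in auto)
  show "((\<lambda>t. D1 u (t,\<theta>)) has_real_derivative D1 (D1 u) (r,\<theta>)) (at r)"
    by (rule D1_deriv) (use du p in auto)
  show "((\<lambda>t. u (r,t)) has_real_derivative D2 u (r,\<theta>)) (at \<theta>)"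
    by (rule D2_deriv) (use du p in auto)
  show "((\<lambda>t. D2 u (r,t)) has_real_derivative D2 (D2 u) (r,\<theta>)) (at \<theta>)"
    by (rule D2_deriv) (use du p in auto)
qed

lemma Qbound:
  fixes m r lam :: real
  assumes "m > 0" "r \<ge> m/2" "lam \<le> 0"
  shows "r^2 * (m / (r^3 * (1 + m/(2*r))^2) + lam * (1 + m/(2*r))^4) \<le> 1/2"
proof -
  have r0: "r > 0" using assms by simp
  have e: "r^2 * (m / (r^3 * (1 + m/(2*r))^2)) = 4 * r * m / (2*r + m)^2"
  proof -
    have s: "1 + m/(2*r) = (2*r+m)/(2*r)" using r0 by (simp add: field_simps)
    have "r^3 * (1 + m/(2*r))^2 = r * (2*r+m)^2 / 4" unfolding s using r0
      by (simp add: power_divide power2_eq_square power3_eq_cube field_simps)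
    moreover define X where "X = (2*r+m)^2"
    moreover have "X > 0" unfolding X_def using r0 assms by simp
    ultimately have e: "r^3 * (1 + m/(2*r))^2 = r * X / 4" by simp
    have "r^2 * (m / (r * X / 4)) = r * (4*r*m) / (r * X)" using r0 \<open>X > 0\<close>
      by (simp add: field_simps power2_eq_square)
    also have "\<dots> = 4*r*m / X" using r0 by simp
    finally show ?thesis unfolding e X_def .
  qed
  have "4 * r * m / (2*r + m)^2 \<le> 1/2"
  proof -
    have pos: "(2*r + m)^2 > 0" using r0 assms by simp
    have "8 * r * m \<le> (2*r + m)^2"
    proof -
      have "0 \<le> (2*r - m)^2" by simp
      thus ?thesis by (simp add: power2_eq_square algebra_simps)
    qed
    thus ?thesis using pos by (simp add: divide_simps)
  qed
  moreover have "r^2 * (lam * (1 + m/(2*r))^4) \<le> 0"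
    using assms r0 by (simp add: mult_nonneg_nonpos mult_nonpos_nonneg)
  ultimately show ?thesis using e by (simp add: distrib_left)
qed


lemma shift_integral:
  fixes f :: "real \<Rightarrow> real"
  assumes cf: "continuous_on UNIV f" and cd: "c \<le> d"
  shows "integral {c..d} (\<lambda>t. f (t + h)) = integral {c+h..d+h} f"
proof -
  define L where "L = c + h - 1"
  define B where "B = d + h + 1"
  define A where "A x = integral {L..x} f" for x
  have cfB: "continuous_on {L..B} f" using cf continuous_on_subset by blast
  have dA: "(A has_real_derivative f x) (at x)" if "L < x" "x < B" for x
  proof -
    have "(A has_real_derivative f x) (at x within {L..B})"
      unfolding A_def by (rule integral_has_real_derivative[OF cfB]) (use that in auto)
    thus ?thesis using at_within_Icc_at[OF that] by simp
  qed
  have "((\<lambda>t. f (t + h)) has_integral (A (d + h) - A (c + h))) {c..d}"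
  proof -
    have "((\<lambda>t. f (t + h)) has_integral ((\<lambda>t. A (t + h)) d - (\<lambda>t. A (t + h)) c)) {c..d}"
    proof (rule fundamental_theorem_of_calculus[OF cd])
      fix t assume t: "t \<in> {c..d}"
      have i: "L < t + h" "t + h < B" using t unfolding L_def B_def by auto
      have "((\<lambda>t. A (t + h)) has_real_derivative f (t + h) * 1) (at t)"
        by (rule DERIV_chain2[where g="\<lambda>t. t + h" and x=t, OF dA[OF i]])
           (rule derivative_eq_intros refl | simp)+
      thus "((\<lambda>t. A (t + h)) has_vector_derivative f (t + h)) (at t within {c..d})"
        by (simp add: has_real_derivative_iff_has_vector_derivative has_vector_derivative_at_within)
    qed
    thus ?thesis by simp
  qed
  moreover have "A (c + h) + integral {c+h..d+h} f = A (d + h)"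
    unfolding A_def by (rule icomb[OF cf]) (use cd L_def in auto)
  ultimately show ?thesis by (simp add: integral_unique algebra_simps)
qed

lemma cshift:
  fixes f :: "real \<times> real \<Rightarrow> real"
  assumes "continuous_on ({a..b} \<times> UNIV) f"
  shows "continuous_on ({a..b} \<times> UNIV) (\<lambda>p. f (fst p, snd p + h) - f p)"
proof -
  have "continuous_on ({a..b} \<times> UNIV) (\<lambda>p. f (fst p, snd p + h))"
    by (rule continuous_on_compose2[OF assms]) (auto intro!: continuous_intros)
  thus ?thesis using assms by (intro continuous_intros)
qed

lemma radial:
  fixes m R lam :: real
  assumes m: "m > 0" and Rm: "R > m / 2" and lam: "lam \<le> 0"
    and u: "eigen_solution m R lam u" and r: "r \<in> {m/2..R}"
  shows "u (r, \<theta> + h) = u (r, \<theta>)"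
proof -
  note rg = reg[OF u]
  have per: "\<And>r \<theta>. m / 2 \<le> r \<and> r \<le> R \<Longrightarrow> u (r, \<theta> + 2 * pi) = u (r, \<theta>)"
    and pde: "\<And>r \<theta>. m / 2 < r \<and> r < R \<Longrightarrow>
        D1 (D1 u) (r, \<theta>) + D1 u (r, \<theta>) / r + D2 (D2 u) (r, \<theta>) / r ^ 2
        + m / (r ^ 3 * (1 + m / (2 * r)) ^ 2) * u (r, \<theta>)
        + lam * (1 + m / (2 * r)) ^ 4 * u (r, \<theta>) = 0"
    and bc1: "\<And>\<theta>. D1 u (m / 2, \<theta>) = 0" and bc2: "\<And>\<theta>. u (R, \<theta>) = 0"
    using u unfolding eigen_solution_def by blast+
  define Q where "Q r = m / (r ^ 3 * (1 + m / (2 * r)) ^ 2) + lam * (1 + m / (2 * r)) ^ 4" for r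
  define sh where "sh f = (\<lambda>p. f (fst p, snd p + h) - f p)" for f :: "real \<times> real \<Rightarrow> real"
  have "sh u (r, \<theta>) = 0"
  proof (rule core[where Q=Q and ?w1.0="sh (D1 u)" and ?w11.0="sh (D1 (D1 u))" and ?w2.0="sh (D2 u)"
        and ?w22.0="sh (D2 (D2 u))"])
    show "0 < m/2" "m/2 < R" using m Rm by auto
    show "r \<in> {m/2..R}" by (rule r)
    show "\<And>r. m/2 \<le> r \<Longrightarrow> r \<le> R \<Longrightarrow> r^2 * Q r \<le> 1/2"
      unfolding Q_def using Qbound[OF m _ lam] by simp
    show "continuous_on ({m/2..R} \<times> UNIV) (sh u)" "continuous_on ({m/2..R} \<times> UNIV) (sh (D1 u))"
      "continuous_on ({m/2..R} \<times> UNIV) (sh (D1 (D1 u)))" "continuous_on ({m/2..R} \<times> UNIV) (sh (D2 u))"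
      unfolding sh_def using rg(1-4) by (auto intro!: cshift)
  next
    fix r \<theta> assume r: "r \<in> {m/2..R}"
    show "((\<lambda>t. sh u (t,\<theta>)) has_real_derivative sh (D1 u) (r,\<theta>)) (at r within {m/2..R})"
      unfolding sh_def using DERIV_diff[OF rg(6)[OF r, of "\<theta>+h"] rg(6)[OF r, of \<theta>]]
      by (auto intro: DERIV_subset)
    show "((\<lambda>t. sh (D1 u) (t,\<theta>)) has_real_derivative sh (D1 (D1 u)) (r,\<theta>)) (at r within {m/2..R})"
      unfolding sh_def using DERIV_diff[OF rg(7)[OF r, of "\<theta>+h"] rg(7)[OF r, of \<theta>]]
      by (auto intro: DERIV_subset)
    have c1: "((\<lambda>t. u (r, t + h)) has_real_derivative D2 u (r, \<theta> + h) * 1) (at \<theta>)"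
      by (rule DERIV_chain2[where g="\<lambda>t. t + h" and x=\<theta>, OF rg(8)[OF r]])
         (rule derivative_eq_intros refl | simp)+
    show "((\<lambda>t. sh u (r,t)) has_real_derivative sh (D2 u) (r,\<theta>)) (at \<theta>)"
      unfolding sh_def using DERIV_diff[OF c1 rg(8)[OF r, of \<theta>]] by simp
    have c2: "((\<lambda>t. D2 u (r, t + h)) has_real_derivative D2 (D2 u) (r, \<theta> + h) * 1) (at \<theta>)"
      by (rule DERIV_chain2[where g="\<lambda>t. t + h" and x=\<theta>, OF rg(9)[OF r]])
         (rule derivative_eq_intros refl | simp)+
    show "((\<lambda>t. sh (D2 u) (r,t)) has_real_derivative sh (D2 (D2 u)) (r,\<theta>)) (at \<theta>)"
      unfolding sh_def using DERIV_diff[OF c2 rg(9)[OF r, of \<theta>]] by simp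
    show "sh u (r, \<theta> + 2*pi) = sh u (r,\<theta>)"
      unfolding sh_def using per[of r "\<theta> + h"] per[of r \<theta>] r by (simp add: algebra_simps)
  next
    fix r \<theta> assume r: "m/2 < r" "r < R"
    show "sh (D1 (D1 u)) (r,\<theta>) + sh (D1 u) (r,\<theta>) / r + sh (D2 (D2 u)) (r,\<theta>) / r^2 + Q r * sh u (r,\<theta>) = 0"
      unfolding sh_def Q_def using pde[of r \<theta>] pde[of r "\<theta>+h"] r
      by (simp add: algebra_simps diff_divide_distrib)
  next
    fix \<theta>
    show "sh (D1 u) (m/2,\<theta>) = 0" "sh u (R,\<theta>) = 0" unfolding sh_def using bc1 bc2 by simp_all
  next
    fix r c assume r: "r \<in> {m/2..R}"
    have cs: "continuous_on UNIV (\<lambda>t. u (r,t))" by (rule cslice2[OF rg(1) r])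
    have i: "integral {c..c+2*pi} (\<lambda>t. u (r, t + h)) = integral {c+h..c+2*pi+h} (\<lambda>t. u (r,t))"
      by (rule shift_integral[OF cs]) simp
    also have "\<dots> = integral {c..c+2*pi} (\<lambda>t. u (r,t))"
      using periodic_integral_start[OF cs, of "2*pi" "c+h" c] per r by (simp add: algebra_simps)
    finally have "integral {c..c+2*pi} (\<lambda>t. u (r, t + h)) - integral {c..c+2*pi} (\<lambda>t. u (r,t)) = 0"
      by simp
    moreover have "integral {c..c+2*pi} (\<lambda>t. u (r, t + h) - u (r,t)) =
       integral {c..c+2*pi} (\<lambda>t. u (r, t + h)) - integral {c..c+2*pi} (\<lambda>t. u (r,t))"
      by (rule integral_diff; rule integrable_continuous_real)
         (auto intro!: continuous_on_compose2[OF cs] continuous_intros cslice2[OF rg(1) r])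
    ultimately show "integral {c..c+2*pi} (\<lambda>t. sh u (r,t)) = 0" unfolding sh_def by simp
  qed
  thus ?thesis unfolding sh_def by simp
qed


lemma radial_D22:
  fixes m R lam :: real
  assumes m: "m > 0" and Rm: "R > m / 2" and lam: "lam \<le> 0"
    and u: "eigen_solution m R lam u" and r: "r \<in> {m/2..R}"
  shows "D2 (D2 u) (r, 0) = 0"
proof -
  have eq: "(\<lambda>t. u (r,t)) = (\<lambda>t. u (r,0))"
    using radial[OF m Rm lam u r, of 0] by auto
  have z: "D2 u (r,t) = 0" for t
    unfolding D2_def by (simp add: eq)
  show ?thesis unfolding D2_def[of "D2 u"] by (simp add: z)
qed

lemma mult_one:
  fixes m R lam :: real
  assumes m: "m > 0" and Rm: "R > m / 2" and lam: "lam \<le> 0"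
    and u: "eigen_solution m R lam u" and v: "eigen_solution m R lam v"
    and z0: "\<alpha> * u (m/2, 0) + \<beta> * v (m/2, 0) = 0"
    and r: "r \<in> {m/2..R}"
  shows "\<alpha> * u (r, \<theta>) + \<beta> * v (r, \<theta>) = 0"
proof -
  note ru = reg[OF u] and rv = reg[OF v]
  have pu: "\<And>r \<theta>. m / 2 < r \<and> r < R \<Longrightarrow>
        D1 (D1 u) (r, \<theta>) + D1 u (r, \<theta>) / r + D2 (D2 u) (r, \<theta>) / r ^ 2
        + m / (r ^ 3 * (1 + m / (2 * r)) ^ 2) * u (r, \<theta>)
        + lam * (1 + m / (2 * r)) ^ 4 * u (r, \<theta>) = 0"
    and bu: "\<And>\<theta>. D1 u (m / 2, \<theta>) = 0"
    using u unfolding eigen_solution_def by blast+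
  have pv: "\<And>r \<theta>. m / 2 < r \<and> r < R \<Longrightarrow>
        D1 (D1 v) (r, \<theta>) + D1 v (r, \<theta>) / r + D2 (D2 v) (r, \<theta>) / r ^ 2
        + m / (r ^ 3 * (1 + m / (2 * r)) ^ 2) * v (r, \<theta>)
        + lam * (1 + m / (2 * r)) ^ 4 * v (r, \<theta>) = 0"
    and bv: "\<And>\<theta>. D1 v (m / 2, \<theta>) = 0"
    using v unfolding eigen_solution_def by blast+
  define Q where "Q r = m / (r ^ 3 * (1 + m / (2 * r)) ^ 2) + lam * (1 + m / (2 * r)) ^ 4" for r
  have cQ: "continuous_on {m/2..R} Q"
  proof -
    have pos: "x > 0" "1 + m / (2 * x) > 0" if "x \<in> {m/2..R}" for x
      using that m by (auto intro: add_pos_pos)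
    show ?thesis unfolding Q_def
      by (intro continuous_intros) (use m pos in \<open>force simp: power_eq_0_iff\<close>)+
  qed
  obtain M where M: "\<And>x. x \<in> {m/2..R} \<Longrightarrow> \<bar>Q x\<bar> \<le> M"
  proof -
    have "bounded (Q ` {m/2..R})"
      by (rule compact_imp_bounded, rule compact_continuous_image[OF cQ]) simp
    then obtain M where "\<forall>y\<in>Q ` {m/2..R}. norm y \<le> M" unfolding bounded_iff by blast
    thus ?thesis using that[of M] by auto
  qed
  define z where "z r = \<alpha> * u (r,0) + \<beta> * v (r,0)" for r
  have "z r = 0"
  proof (rule ode_unique[where a="m/2" and b=R and z=z and r=r and Q=Q and M=M and ?z1.0="\<lambda>r. \<alpha> * D1 u (r,0) + \<beta> * D1 v (r,0)"
        and ?z11.0="\<lambda>r. \<alpha> * D1 (D1 u) (r,0) + \<beta> * D1 (D1 v) (r,0)"])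
    show "0 < m/2" "m/2 < R" using m Rm by auto
    show "r \<in> {m/2..R}" by (rule r)
    show "z (m/2) = 0" unfolding z_def using z0 .
    show "\<alpha> * D1 u (m/2,0) + \<beta> * D1 v (m/2,0) = 0" using bu bv by simp
    show "\<And>r. r \<in> {m/2..R} \<Longrightarrow> \<bar>Q r\<bar> \<le> M" by (rule M)
  next
    fix r assume r: "r \<in> {m/2..R}"
    show "(z has_real_derivative \<alpha> * D1 u (r,0) + \<beta> * D1 v (r,0)) (at r)"
      unfolding z_def using DERIV_add[OF DERIV_cmult[OF ru(6)[OF r]] DERIV_cmult[OF rv(6)[OF r]]] by simp
    show "((\<lambda>r. \<alpha> * D1 u (r,0) + \<beta> * D1 v (r,0)) has_real_derivative
           \<alpha> * D1 (D1 u) (r,0) + \<beta> * D1 (D1 v) (r,0)) (at r)"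
      using DERIV_add[OF DERIV_cmult[OF ru(7)[OF r]] DERIV_cmult[OF rv(7)[OF r]]] by simp
  next
    fix r assume r: "m/2 < r" "r < R"
    hence rin: "r \<in> {m/2..R}" by auto
    have a1: "D2 (D2 u) (r,0) = 0" by (rule radial_D22[OF m Rm lam u rin])
    have a2: "D2 (D2 v) (r,0) = 0" by (rule radial_D22[OF m Rm lam v rin])
    have e1: "D1 (D1 u) (r,0) + D1 u (r,0) / r + Q r * u (r,0) = 0"
      using pu[of r 0] r a1 unfolding Q_def by (simp add: algebra_simps)
    have e2: "D1 (D1 v) (r,0) + D1 v (r,0) / r + Q r * v (r,0) = 0"
      using pv[of r 0] r a2 unfolding Q_def by (simp add: algebra_simps)
    have "\<alpha> * (D1 (D1 u) (r,0) + D1 u (r,0) / r + Q r * u (r,0)) +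
          \<beta> * (D1 (D1 v) (r,0) + D1 v (r,0) / r + Q r * v (r,0)) = 0"
      using e1 e2 by simp
    thus "\<alpha> * D1 (D1 u) (r,0) + \<beta> * D1 (D1 v) (r,0) +
          (\<alpha> * D1 u (r,0) + \<beta> * D1 v (r,0)) / r + Q r * z r = 0"
      unfolding z_def by (simp add: algebra_simps add_divide_distrib)
  qed
  thus ?thesis unfolding z_def
    using radial[OF m Rm lam u r, of 0 \<theta>] radial[OF m Rm lam v r, of 0 \<theta>] by simp
qed

theorem mainTheorem5:
  fixes m R lam :: real
  assumes "m > 0" and "R > m / 2" and "lam \<le> 0"
  shows "(\<forall>u. eigen_solution m R lam u \<longrightarrow>
            (\<forall>r \<theta> \<theta>'. m / 2 \<le> r \<and> r \<le> R \<longrightarrow> u (r, \<theta>) = u (r, \<theta>')))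
       \<and> (\<forall>u v. eigen_solution m R lam u \<and> eigen_solution m R lam v \<longrightarrow>
            (\<exists>a b. (a, b) \<noteq> (0, 0) \<and>
               (\<forall>r \<theta>. m / 2 \<le> r \<and> r \<le> R \<longrightarrow> a * u (r, \<theta>) + b * v (r, \<theta>) = 0)))"
proof (intro conjI allI impI)
  fix u r \<theta> \<theta>'
  assume u: "eigen_solution m R lam u" and r: "m / 2 \<le> r \<and> r \<le> R"
  show "u (r, \<theta>) = u (r, \<theta>')"
    using radial[OF assms u _, of r \<theta> "\<theta>' - \<theta>"] r by simp
next
  fix u v assume uv: "eigen_solution m R lam u \<and> eigen_solution m R lam v"
  show "\<exists>a b. (a, b) \<noteq> (0, 0) \<and>
               (\<forall>r \<theta>. m / 2 \<le> r \<and> r \<le> R \<longrightarrow> a * u (r, \<theta>) + b * v (r, \<theta>) = 0)"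
  proof (cases "u (m/2, 0) = 0 \<and> v (m/2, 0) = 0")
    case True
    show ?thesis
      by (rule exI[of _ 1], rule exI[of _ 0])
         (use mult_one[OF assms, of u v 1 0] uv True in auto)
  next
    case False
    show ?thesis
      by (rule exI[of _ "v (m/2, 0)"], rule exI[of _ "- u (m/2, 0)"])
         (use mult_one[OF assms, of u v "v (m/2, 0)" "- u (m/2, 0)"] uv False in auto)
  qed
qed

end
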